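(* Under the standing assumptions of the context, for every integer $\ell\ge1$ the limit $C_\ell(x,\infty,1/2)=\lim_{n\to\infty}C_\ell(x,n,1/2)$ exists and \[ C_\ell(x,\infty,1/2)=\sum_{l=\ell}^\infty(l-\ell+1)\,d(\mathcal K_l)>0 . \]
   Context: Standing assumptions: $A=\{0,1\}$, $\Sigma=A^{\mathbb N_0}$ with metric $\rho(y,z)=2^{-\min\{i\ge0:\,y_i\ne z_i\}}$ ($y\ne z$) and shift $\sigma$. $\zeta:A\to A^*$ is a binary substitution of constant length $q\ge2$, primitive, aperiodic (its subshift $X_\zeta$ contains a non-$\sigma$-periodic sequence), with $\zeta(0)$ starting with $0$; $x=\lim_k\zeta^k(0)$ its fixed point starting with $0$. Correlation sum: $C_\ell(x,n,\varepsilon)=n^{-2}\#\{(i,j)\in[0,n)^2:\max_{0\le k<\ell}\rho(\sigma^{i+k}x,\sigma^{j+k}x)\le\varepsilon\}$. The recurrence plot $R(x,\infty,1/2)$ has indices $i,j\in\mathbb N_0$ and entry $1$ iff $x_i=x_j$; an inner line of length $l$ in it is $(i,j,l)$ with $i,j\ge1$, $i\ne j$, $x_{i+k}=x_{j+k}$ for $0\le k<l$, $x_{i-1}\ne x_{j-1}$ and $x_{i+l}\ne x_{j+l}$. $\mathcal K_l$ is the set of starting points $(i,j)\in\mathbb N^2$ of inner lines of length $l$; $d(M)=\lim_n n^{-2}\#(M\cap[0,n)^2)$, known to exist for $M=\mathcal K_l$. *)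

theory Defs
  imports "HOL-Analysis.Analysis"
begin

(* Alphabet A = {0,1} is represented by bool: False = 0, True = 1. *)

definition subst_word :: "(bool \<Rightarrow> bool list) \<Rightarrow> bool list \<Rightarrow> bool list" where
  "subst_word \<zeta> w = concat (map \<zeta> w)"

definition subst_iter :: "(bool \<Rightarrow> bool list) \<Rightarrow> nat \<Rightarrow> bool \<Rightarrow> bool list" where
  "subst_iter \<zeta> k a = (subst_word \<zeta> ^^ k) [a]"

definition constant_length :: "(bool \<Rightarrow> bool list) \<Rightarrow> nat \<Rightarrow> bool" where
  "constant_length \<zeta> q \<longleftrightarrow> (\<forall>a. length (\<zeta> a) = q)"

definition primitive_subst :: "(bool \<Rightarrow> bool list) \<Rightarrow> bool" where
  "primitive_subst \<zeta> \<longleftrightarrow> (\<exists>k\<ge>1. \<forall>a b. b \<in> set (subst_iter \<zeta> k a))"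

definition subst_language :: "(bool \<Rightarrow> bool list) \<Rightarrow> bool list set" where
  "subst_language \<zeta> = {w. \<exists>k a u v. subst_iter \<zeta> k a = u @ w @ v}"

definition factor :: "(nat \<Rightarrow> bool) \<Rightarrow> nat \<Rightarrow> nat \<Rightarrow> bool list" where
  "factor y i m = map (\<lambda>k. y (i + k)) [0..<m]"

definition subshift :: "(bool \<Rightarrow> bool list) \<Rightarrow> (nat \<Rightarrow> bool) set" where
  "subshift \<zeta> = {y. \<forall>i m. factor y i m \<in> subst_language \<zeta>}"

definition shift :: "(nat \<Rightarrow> bool) \<Rightarrow> nat \<Rightarrow> bool" where
  "shift y = (\<lambda>i. y (Suc i))"

definition shift_periodic :: "(nat \<Rightarrow> bool) \<Rightarrow> bool" where
  "shift_periodic y \<longleftrightarrow> (\<exists>p\<ge>1. (shift ^^ p) y = y)"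

definition aperiodic_subst :: "(bool \<Rightarrow> bool list) \<Rightarrow> bool" where
  "aperiodic_subst \<zeta> \<longleftrightarrow> (\<exists>y\<in>subshift \<zeta>. \<not> shift_periodic y)"

definition rho :: "(nat \<Rightarrow> bool) \<Rightarrow> (nat \<Rightarrow> bool) \<Rightarrow> real" where
  "rho y z = (if y = z then 0 else (1/2) ^ (LEAST i. y i \<noteq> z i))"

definition corr_sum :: "nat \<Rightarrow> (nat \<Rightarrow> bool) \<Rightarrow> nat \<Rightarrow> real \<Rightarrow> real" where
  "corr_sum L x n eps =
     real (card {(i,j) \<in> {0..<n} \<times> {0..<n}.
        Max ((\<lambda>k. rho ((shift ^^ (i + k)) x) ((shift ^^ (j + k)) x)) ` {0..<L}) \<le> eps})
     / (real n)^2"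

definition inner_line_starts :: "(nat \<Rightarrow> bool) \<Rightarrow> nat \<Rightarrow> (nat \<times> nat) set" where
  "inner_line_starts x l = {(i,j). i \<ge> 1 \<and> j \<ge> 1 \<and> i \<noteq> j \<and>
      (\<forall>k<l. x (i + k) = x (j + k)) \<and> x (i - 1) \<noteq> x (j - 1) \<and> x (i + l) \<noteq> x (j + l)}"

definition density :: "(nat \<times> nat) set \<Rightarrow> real" where
  "density M = lim (\<lambda>n. real (card (M \<inter> ({0..<n} \<times> {0..<n}))) / (real n)^2)"

end

theory Submission
  imports Defs
begin


lemma sw_funpow: "(subst_word \<zeta> ^^ k) ws = concat (map (subst_iter \<zeta> k) ws)"
proof (induction k arbitrary: ws)
  case 0 then show ?case by (induct ws) (simp_all add: subst_iter_def)
next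
  case (Suc k)
  have "(subst_word \<zeta> ^^ Suc k) ws = subst_word \<zeta> ((subst_word \<zeta> ^^ k) ws)" by simp
  also have "\<dots> = subst_word \<zeta> (concat (map (subst_iter \<zeta> k) ws))" by (simp only: Suc)
  also have "\<dots> = concat (map (subst_iter \<zeta> (Suc k)) ws)"
  proof -
    have e: "subst_iter \<zeta> (Suc k) a = subst_word \<zeta> (subst_iter \<zeta> k a)" for a
      by (simp add: subst_iter_def)
    show ?thesis unfolding e by (induct ws) (simp_all add: subst_word_def)
  qed
  finally show ?case .
qed

lemma subst_iter_add: "subst_iter \<zeta> (j + k) b = concat (map (subst_iter \<zeta> k) (subst_iter \<zeta> j b))"
proof -
  have "subst_iter \<zeta> (j + k) b = (subst_word \<zeta> ^^ k) (subst_iter \<zeta> j b)"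
    unfolding subst_iter_def by (simp add: add.commute[of j k] funpow_add)
  then show ?thesis by (simp add: sw_funpow)
qed

lemma subst_iter_len: assumes "constant_length \<zeta> q" shows "length (subst_iter \<zeta> k b) = q ^ k"
proof (induction k arbitrary: b)
  case 0 then show ?case by (simp add: subst_iter_def)
next
  case (Suc k)
  have "subst_iter \<zeta> (1 + k) b = concat (map (subst_iter \<zeta> k) (subst_iter \<zeta> 1 b))"
    by (rule subst_iter_add)
  moreover have "subst_iter \<zeta> 1 b = \<zeta> b" by (simp add: subst_iter_def subst_word_def)
  ultimately have "length (subst_iter \<zeta> (Suc k) b) = (\<Sum>a\<leftarrow>\<zeta> b. q^k)"
    by (simp add: length_concat o_def Suc)
  also have "\<dots> = q * q^k" using assms by (simp add: sum_list_triv constant_length_def)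
  finally show ?case by simp
qed

lemma nth_concat_uniform:
  assumes "\<forall>a\<in>set xs. length (f a) = B" "i < length xs" "r < B"
  shows "concat (map f xs) ! (B * i + r) = f (xs ! i) ! r"
  using assms
proof (induction xs arbitrary: i)
  case Nil then show ?case by simp
next
  case (Cons a xs)
  show ?case
  proof (cases i)
    case 0 then show ?thesis using Cons by (simp add: nth_append)
  next
    case (Suc i')
    have "B * i + r = B + (B * i' + r)" using Suc by simp
    have la: "length (f a) = B" using Cons.prems by simp
    have "concat (map f (a # xs)) ! (B * i + r) = (f a @ concat (map f xs)) ! (length (f a) + (B * i' + r))"
      using la \<open>B * i + r = B + (B * i' + r)\<close> by (simp only: concat.simps list.map)
    also have "\<dots> = concat (map f xs) ! (B * i' + r)" by (rule nth_append_length_plus)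
    also have "\<dots> = f (xs ! i') ! r" using Cons.IH[of i'] Cons.prems Suc by simp
    finally show ?thesis using Suc by simp
  qed
qed



locale sfp =
  fixes \<zeta> :: "bool \<Rightarrow> bool list" and q :: nat and x :: "nat \<Rightarrow> bool"
  assumes q: "q \<ge> 2" and const: "constant_length \<zeta> q"
    and prim: "primitive_subst \<zeta>" and aper: "aperiodic_subst \<zeta>"
    and fixpt: "\<forall>k i. i < length (subst_iter \<zeta> k False) \<longrightarrow> x i = subst_iter \<zeta> k False ! i"
begin

abbreviation Z where "Z k b \<equiv> subst_iter \<zeta> k b"

lemma Zlen: "length (Z k b) = q ^ k" using subst_iter_len[OF const] .

lemma less_qpow: "n < q ^ n"
proof -
  have "n < 2 ^ n" by (rule less_exp)
  also have "(2::nat) ^ n \<le> q ^ n" using q by (simp add: power_mono)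
  finally show ?thesis .
qed

lemma xZ: assumes "r < q ^ k" shows "x (q ^ k * i + r) = Z k (x i) ! r"
proof -
  have qp: "q ^ k > 0" using q by simp
  have ij: "i < q ^ i" by (rule less_qpow)
  have "q ^ k * i + r < q ^ k * (i + 1)" using assms by simp
  also have "\<dots> \<le> q ^ k * q ^ i" using ij by (intro mult_le_mono2) simp
  finally have lt: "q ^ k * i + r < q ^ (i + k)" by (simp add: power_add mult.commute)
  have "x (q ^ k * i + r) = Z (i + k) False ! (q ^ k * i + r)" using fixpt lt by (simp add: Zlen)
  also have "Z (i + k) False = concat (map (\<lambda>b. Z k b) (Z i False))" by (rule subst_iter_add)
  also have "concat (map (\<lambda>b. Z k b) (Z i False)) ! (q ^ k * i + r) = Z k (Z i False ! i) ! r"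
    by (rule nth_concat_uniform) (use assms ij in \<open>auto simp: Zlen\<close>)
  also have "Z i False ! i = x i" using fixpt ij by (simp add: Zlen)
  finally show ?thesis .
qed

definition Kp where "Kp = (SOME k. k \<ge> 1 \<and> (\<forall>a b. b \<in> set (Z k a)))"

lemma Kp: "Kp \<ge> 1" "\<And>a b. b \<in> set (Z Kp a)"
proof -
  have "\<exists>k. k \<ge> 1 \<and> (\<forall>a b. b \<in> set (Z k a))" using prim by (simp add: primitive_subst_def)
  then have "Kp \<ge> 1 \<and> (\<forall>a b. b \<in> set (Z Kp a))" unfolding Kp_def by (rule someI_ex)
  then show "Kp \<ge> 1" "\<And>a b. b \<in> set (Z Kp a)" by auto
qed

lemma occ: "\<exists>t < q ^ Kp. x (q ^ Kp * i + t) = b"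
proof -
  from Kp(2)[of b "x i"] obtain t where "t < length (Z Kp (x i))" "Z Kp (x i) ! t = b"
    by (auto simp: in_set_conv_nth)
  then show ?thesis using xZ[of t Kp i] by (auto simp: Zlen)
qed

lemma x_letter: "\<exists>i. x i = b"
  using occ[of 0 b] by auto

lemma shift_pow: "(shift ^^ n) y = (\<lambda>t. y (t + n))"
  by (induction n) (auto simp: shift_def)

lemma unif_rec: "\<exists>R. \<forall>s. \<exists>j. s \<le> j \<and> j + m \<le> s + R \<and> (\<forall>t<m. x (j + t) = x (i0 + t))"
proof -
  define k where "k = i0 + m"
  have km: "i0 + m < q ^ k" unfolding k_def by (rule less_qpow)
  define E where "E = q ^ k * q ^ Kp"
  have Epos: "E > 0" using q by (simp add: E_def)
  have "\<exists>j. s \<le> j \<and> j + m \<le> s + 2 * E \<and> (\<forall>t<m. x (j + t) = x (i0 + t))" for s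
  proof -
    define i' where "i' = s div E + 1"
    have s1: "E * (s div E) \<le> s" by simp
    have s2: "s < E * (s div E) + E" using Epos
      by (metis add.commute div_mult_mod_eq mod_less_divisor nat_add_left_cancel_less mult.commute)
    obtain t where t: "t < q ^ Kp" "x (q ^ Kp * i' + t) = x 0" using occ by blast
    define c where "c = q ^ Kp * i' + t"
    have xc: "x (q ^ k * c + r) = x r" if "r < q ^ k" for r
      using xZ[OF that, of c] xZ[OF that, of 0] t(2) by (simp add: c_def)
    define j where "j = q ^ k * c + i0"
    have "E * i' \<le> q ^ k * c" unfolding E_def c_def by (simp add: algebra_simps)
    moreover have "s \<le> E * i'" using s2 by (simp add: i'_def algebra_simps)
    ultimately have j1: "s \<le> j" unfolding j_def by simp
    have "c + 1 \<le> q ^ Kp * (i' + 1)" using t(1) by (simp add: c_def algebra_simps)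
    then have "q ^ k * (c + 1) \<le> q ^ k * (q ^ Kp * (i' + 1))" by (rule mult_le_mono2)
    then have "q ^ k * c + q ^ k \<le> E * (i' + 1)" by (simp add: E_def algebra_simps)
    moreover have "E * (i' + 1) \<le> s + 2 * E" using s1 by (simp add: i'_def algebra_simps)
    ultimately have j2: "j + m \<le> s + 2 * E" using km unfolding j_def by linarith
    have j3: "\<forall>t<m. x (j + t) = x (i0 + t)"
      using xc km unfolding j_def by (auto simp: add.assoc)
    show ?thesis using j1 j2 j3 by blast
  qed
  then show ?thesis by blast
qed

lemma lang_occ: assumes "w \<in> subst_language \<zeta>" shows "\<exists>j. \<forall>t<length w. x (j + t) = w ! t"
proof -
  obtain k a u v where e: "Z k a = u @ w @ v" using assms by (auto simp: subst_language_def)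
  have len: "length u + length w \<le> q ^ k" using arg_cong[OF e, of length] by (simp add: Zlen)
  obtain i where i: "x i = a" using x_letter by blast
  have "x (q ^ k * i + length u + t) = w ! t" if "t < length w" for t
  proof -
    have "x (q ^ k * i + (length u + t)) = Z k a ! (length u + t)"
      using xZ[of "length u + t" k i] that len i by simp
    also have "\<dots> = w ! t" using e that by (simp add: nth_append)
    finally show ?thesis by (simp add: add.assoc)
  qed
  then show ?thesis by (metis add.assoc)
qed

lemma no_long_period: assumes "p \<ge> 1" shows "\<exists>N. \<forall>i. \<exists>t<N. x (i + t + p) \<noteq> x (i + t)"
proof (rule ccontr)
  assume "\<not> ?thesis"
  then have per: "\<forall>N. \<exists>i. \<forall>t<N. x (i + t + p) = x (i + t)" by blast
  obtain y where y: "y \<in> subshift \<zeta>" "\<not> shift_periodic y" using aper by (auto simp: aperiodic_subst_def)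
  have "y (s + p) = y s" for s
  proof -
    define w where "w = factor y s (p + 1)"
    have wl: "w \<in> subst_language \<zeta>" using y(1) by (simp add: subshift_def w_def)
    have lw: "length w = p + 1" by (simp add: w_def factor_def)
    obtain j where j: "\<forall>t<p+1. x (j + t) = w ! t" using lang_occ[OF wl] unfolding lw by blast
    have wt: "w ! t = y (s + t)" if "t < p + 1" for t using that by (simp add: w_def factor_def del: upt_Suc)
    obtain R where R: "\<forall>s. \<exists>j'. s \<le> j' \<and> j' + (p+1) \<le> s + R \<and> (\<forall>t<p+1. x (j' + t) = x (j + t))"
      using unif_rec by blast
    obtain i where i: "\<forall>t<R. x (i + t + p) = x (i + t)" using per by blast
    obtain j' where j': "i \<le> j'" "j' + (p+1) \<le> i + R" "\<forall>t<p+1. x (j' + t) = x (j + t)"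
      using R by blast
    have "j' - i < R" using j'(1,2) by simp
    then have "x (i + (j' - i) + p) = x (i + (j' - i))" using i by blast
    then have "x (j' + p) = x j'" using j'(1) by simp
    then have "x (j + p) = x (j + 0)" using j'(3) by (metis add.right_neutral less_add_one add_gr_0 less_one)
    then show ?thesis using j wt by (metis less_add_one add_gr_0 zero_less_one add.right_neutral)
  qed
  then have "(shift ^^ p) y = y" by (auto simp: shift_pow)
  then show False using y(2) assms by (auto simp: shift_periodic_def)
qed

lemma sep: assumes "g \<ge> 1"
  shows "\<exists>N0. \<forall>N\<ge>N0. \<forall>i j. i < j \<and> (\<forall>t<N. x (i + t) = x (j + t)) \<longrightarrow> j - i \<ge> g"
proof -
  have "\<forall>p. \<exists>N. p \<ge> 1 \<longrightarrow> (\<forall>i. \<exists>t<N. x (i + t + p) \<noteq> x (i + t))"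
    using no_long_period by blast
  then obtain Np where Np: "\<And>p i. p \<ge> 1 \<Longrightarrow> \<exists>t<Np p. x (i + t + p) \<noteq> x (i + t)" by metis
  define N0 where "N0 = (\<Sum>p\<in>{1..<g}. Np p)"
  have "j - i \<ge> g" if N: "N \<ge> N0" and ij: "i < j" "\<forall>t<N. x (i + t) = x (j + t)" for N i j
  proof (rule ccontr)
    assume "\<not> ?thesis"
    then have p: "j - i \<in> {1..<g}" using ij by auto
    have "Np (j - i) \<le> N0" unfolding N0_def using p by (intro member_le_sum) auto
    have p1: "j - i \<ge> 1" using p by simp
    obtain t where t: "t < Np (j - i)" "x (i + t + (j - i)) \<noteq> x (i + t)" using Np[OF p1, of i] by blast
    have "x (i + t) = x (j + t)" using ij(2) t(1) \<open>Np (j - i) \<le> N0\<close> N by auto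
    moreover have "i + t + (j - i) = j + t" using ij by simp
    ultimately show False using t(2) by metis
  qed
  then show ?thesis by blast
qed

end


definition cntg :: "(nat \<Rightarrow> bool) \<Rightarrow> nat \<Rightarrow> nat \<Rightarrow> nat \<Rightarrow> nat" where
  "cntg Pr m a L = card {r. r < L \<and> r + m \<le> L \<and> Pr (a + r)}"

lemma cntg_split:
  "cntg Pr m a L1 + cntg Pr m (a + L1) L2 \<le> cntg Pr m a (L1 + L2)"
  "cntg Pr m a (L1 + L2) \<le> cntg Pr m a L1 + cntg Pr m (a + L1) L2 + m"
proof -
  define S where "S = {r. r < L1 + L2 \<and> r + m \<le> L1 + L2 \<and> Pr (a + r)}"
  define A where "A = {r. r < L1 \<and> r + m \<le> L1 \<and> Pr (a + r)}"
  define B where "B = {r. r < L2 \<and> r + m \<le> L2 \<and> Pr (a + L1 + r)}"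
  define B' where "B' = (\<lambda>r. L1 + r) ` B"
  have fin: "finite A" "finite B" "finite B'" "finite S" by (auto simp: A_def B_def B'_def S_def)
  have cB: "card B' = card B" unfolding B'_def by (rule card_image) (auto simp: inj_on_def)
  have dis: "A \<inter> B' = {}" by (auto simp: A_def B'_def)
  have sub: "A \<union> B' \<subseteq> S" by (auto simp: A_def B'_def B_def S_def add.assoc)
  have "card A + card B' = card (A \<union> B')" using card_Un_disjoint[OF fin(1,3) dis] by simp
  also have "\<dots> \<le> card S" using sub fin by (intro card_mono) auto
  finally show "cntg Pr m a L1 + cntg Pr m (a + L1) L2 \<le> cntg Pr m a (L1 + L2)"
    using cB by (simp add: cntg_def A_def B_def S_def)
  have sub2: "S \<subseteq> A \<union> B' \<union> {L1 - m..<L1}"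
  proof
    fix r assume r: "r \<in> S"
    show "r \<in> A \<union> B' \<union> {L1 - m..<L1}"
    proof (cases "r < L1")
      case True
      then show ?thesis using r by (cases "r + m \<le> L1") (auto simp: A_def S_def)
    next
      case False
      then have "r - L1 \<in> B" using r by (auto simp: B_def S_def)
      then have "L1 + (r - L1) \<in> B'" unfolding B'_def by blast
      then show ?thesis using False by simp
    qed
  qed
  have "card S \<le> card (A \<union> B' \<union> {L1 - m..<L1})" using sub2 fin by (intro card_mono) auto
  also have "\<dots> \<le> card A + card B' + card {L1 - m..<L1}"
    by (meson card_Un_le le_trans add_le_mono1)
  also have "card {L1 - m..<L1} \<le> m" by simp
  finally show "cntg Pr m a (L1 + L2) \<le> cntg Pr m a L1 + cntg Pr m (a + L1) L2 + m"
    using cB by (simp add: cntg_def A_def B_def S_def)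
qed

lemma cntg_mono: "L1 \<le> L \<Longrightarrow> cntg Pr m a L1 \<le> cntg Pr m a L"
  using cntg_split(1)[of Pr m a L1 "L - L1"] by simp

lemma cntg_le: "cntg Pr m a L \<le> L"
proof -
  have "cntg Pr m a L \<le> card {..<L}" unfolding cntg_def by (intro card_mono) auto
  then show ?thesis by simp
qed

lemma cntg_blocks:
  "(\<Sum>j<t. cntg Pr m (a + j * L) L) \<le> cntg Pr m a (t * L)"
  "cntg Pr m a (t * L) \<le> (\<Sum>j<t. cntg Pr m (a + j * L) L) + t * m"
proof (induction t)
  case 0
  { case 1 show ?case by simp }
  { case 2 show ?case by (simp add: cntg_def) }
next
  case (Suc t)
  have e: "Suc t * L = t * L + L" by simp
  { case 1 show ?case using Suc.IH(1) cntg_split(1)[of Pr m a "t * L" L] unfolding e by simp }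
  { case 2 show ?case using Suc.IH(2) cntg_split(2)[of Pr m a "t * L" L] unfolding e by simp }
qed

lemma count_vs_cntg:
  "cntg Pr m 0 n \<le> card {i. i < n \<and> Pr i}"
  "card {i. i < n \<and> Pr i} \<le> cntg Pr m 0 n + m"
proof -
  show "cntg Pr m 0 n \<le> card {i. i < n \<and> Pr i}" unfolding cntg_def by (intro card_mono) auto
  have "{i. i < n \<and> Pr i} \<subseteq> {r. r < n \<and> r + m \<le> n \<and> Pr (0 + r)} \<union> {n - m..<n}" by auto
  then have "card {i. i < n \<and> Pr i} \<le> card ({r. r < n \<and> r + m \<le> n \<and> Pr (0 + r)} \<union> {n - m..<n})"
    by (intro card_mono) auto
  also have "\<dots> \<le> card {r. r < n \<and> r + m \<le> n \<and> Pr (0 + r)} + card {n - m..<n}" by (rule card_Un_le)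
  finally show "card {i. i < n \<and> Pr i} \<le> cntg Pr m 0 n + m" unfolding cntg_def by simp
qed



lemma sum_le_one_rest:
  fixes f :: "nat \<Rightarrow> nat"
  assumes "finite A" "s0 \<in> A" "\<And>s. s \<in> A \<Longrightarrow> f s \<le> H"
  shows "sum f A \<le> f s0 + (card A - 1) * H"
proof -
  have "sum f A = f s0 + sum f (A - {s0})" using assms by (simp add: sum.remove)
  moreover have "sum f (A - {s0}) \<le> card (A - {s0}) * H"
    using sum_bounded_above[of "A - {s0}" f H] assms by simp
  moreover have "card (A - {s0}) = card A - 1" using assms by simp
  ultimately show ?thesis by simp
qed

lemma sum_ge_one_rest:
  fixes f :: "nat \<Rightarrow> nat"
  assumes "finite A" "s0 \<in> A" "\<And>s. s \<in> A \<Longrightarrow> H \<le> f s"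
  shows "f s0 + (card A - 1) * H \<le> sum f A"
proof -
  have "sum f A = f s0 + sum f (A - {s0})" using assms by (simp add: sum.remove)
  moreover have "card (A - {s0}) * H \<le> sum f (A - {s0})"
    using sum_bounded_below[of "A - {s0}" H f] assms by simp
  moreover have "card (A - {s0}) = card A - 1" using assms by simp
  ultimately show ?thesis by simp
qed

context sfp begin

definition ix :: "bool \<Rightarrow> nat" where "ix b = (SOME i. x i = b)"

lemma ix: "x (ix b) = b" unfolding ix_def using x_letter by (rule someI_ex)

context fixes w :: "bool list" begin

definition Pw where "Pw i \<longleftrightarrow> factor x i (length w) = w"
definition h where "h k i = cntg Pw (length w) (q ^ k * i) (q ^ k)"
definition hi where "hi k = max (h k (ix False)) (h k (ix True))"
definition lo where "lo k = min (h k (ix False)) (h k (ix True))"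

lemma hdep: assumes "x i = x i'" shows "h k i = h k i'"
proof -
  have "Pw (q ^ k * i + r) = Pw (q ^ k * i' + r)" if "r + length w \<le> q ^ k" for r
  proof -
    have "factor x (q ^ k * i + r) (length w) = factor x (q ^ k * i' + r) (length w)"
      unfolding factor_def
    proof (rule map_cong[OF refl])
      fix t assume "t \<in> set [0..<length w]"
      then have t: "r + t < q ^ k" using that by auto
      show "x (q ^ k * i + r + t) = x (q ^ k * i' + r + t)"
        using xZ[OF t, of i] xZ[OF t, of i'] assms by (simp add: add.assoc)
    qed
    then show ?thesis by (simp add: Pw_def)
  qed
  then show ?thesis unfolding h_def cntg_def by (intro arg_cong[where f = card] Collect_cong) auto
qed

lemma hle: "h k i \<le> q ^ k" unfolding h_def by (rule cntg_le)

lemma hrec: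
  "(\<Sum>s<q^j. h k (q ^ j * i + s)) \<le> h (k + j) i"
  "h (k + j) i \<le> (\<Sum>s<q^j. h k (q ^ j * i + s)) + q ^ j * length w"
proof -
  have e: "cntg Pw (length w) (q ^ (k + j) * i + s * q ^ k) (q ^ k) = h k (q ^ j * i + s)" for s
    unfolding h_def by (simp add: power_add algebra_simps)
  have h2: "h (k + j) i = cntg Pw (length w) (q ^ (k + j) * i) (q ^ j * q ^ k)"
    unfolding h_def by (simp add: power_add mult.commute)
  show "(\<Sum>s<q^j. h k (q ^ j * i + s)) \<le> h (k + j) i"
    using cntg_blocks(1)[where t="q^j" and Pr=Pw and m="length w" and a="q ^ (k + j) * i" and L="q ^ k"] unfolding h2 e by simp
  show "h (k + j) i \<le> (\<Sum>s<q^j. h k (q ^ j * i + s)) + q ^ j * length w"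
    using cntg_blocks(2)[where t="q^j" and Pr=Pw and m="length w" and a="q ^ (k + j) * i" and L="q ^ k"] unfolding h2 e by simp
qed

lemma h_bounds: "lo k \<le> h k i" "h k i \<le> hi k"
proof -
  have "h k i = h k (ix (x i))" by (rule hdep) (simp add: ix)
  then show "lo k \<le> h k i" "h k i \<le> hi k" unfolding lo_def hi_def by (cases "x i"; simp)+
qed

lemma lo_att: "\<exists>s<q ^ Kp. h k (q ^ Kp * i + s) = lo k"
proof -
  obtain b where b: "lo k = h k (ix b)" unfolding lo_def by (metis min_def)
  obtain s where s: "s < q ^ Kp" "x (q ^ Kp * i + s) = b" using occ by blast
  have "h k (q ^ Kp * i + s) = h k (ix b)" by (rule hdep) (simp add: s ix)
  then show ?thesis using s b by auto
qed

lemma hi_att: "\<exists>s<q ^ Kp. h k (q ^ Kp * i + s) = hi k"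
proof -
  obtain b where b: "hi k = h k (ix b)" unfolding hi_def by (metis max_def)
  obtain s where s: "s < q ^ Kp" "x (q ^ Kp * i + s) = b" using occ by blast
  have "h k (q ^ Kp * i + s) = h k (ix b)" by (rule hdep) (simp add: s ix)
  then show ?thesis using s b by auto
qed

lemma step1: "hi (Suc k) \<le> q * hi k + q * length w" "q * lo k \<le> lo (Suc k)"
proof -
  have up: "h (Suc k) i \<le> q * hi k + q * length w" for i
  proof -
    have "(\<Sum>s<q^1. h k (q ^ 1 * i + s)) \<le> of_nat (card {..<q^1}) * hi k"
      by (rule sum_bounded_above) (rule h_bounds)
    then show ?thesis using hrec(2)[of k 1 i] by simp
  qed
  show "hi (Suc k) \<le> q * hi k + q * length w" using up[of "ix False"] up[of "ix True"] by (simp add: hi_def[of "Suc k"] hi_def[of "k + Kp"])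
  have dn: "q * lo k \<le> h (Suc k) i" for i
  proof -
    have "of_nat (card {..<q^1}) * lo k \<le> (\<Sum>s<q^1. h k (q ^ 1 * i + s))"
      by (rule sum_bounded_below) (rule h_bounds)
    then show ?thesis using hrec(1)[where j=1 and k=k and i=i] by simp
  qed
  show "q * lo k \<le> lo (Suc k)" using dn[of "ix False"] dn[of "ix True"] by (simp add: lo_def[of "Suc k"] lo_def[of "k + Kp"])
qed

lemma stepK:
  "hi (k + Kp) \<le> (q ^ Kp - 1) * hi k + lo k + q ^ Kp * length w"
  "(q ^ Kp - 1) * lo k + hi k \<le> lo (k + Kp)"
proof -
  have up: "h (k + Kp) i \<le> (q ^ Kp - 1) * hi k + lo k + q ^ Kp * length w" for i
  proof -
    obtain s0 where s0: "s0 < q ^ Kp" "h k (q ^ Kp * i + s0) = lo k" using lo_att by blast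
    have "(\<Sum>s<q^Kp. h k (q ^ Kp * i + s)) \<le> h k (q ^ Kp * i + s0) + (card {..<q^Kp} - 1) * hi k"
      by (rule sum_le_one_rest) (use s0 h_bounds in auto)
    then show ?thesis using hrec(2)[of k Kp i] s0 by simp
  qed
  show "hi (k + Kp) \<le> (q ^ Kp - 1) * hi k + lo k + q ^ Kp * length w" using up[of "ix False"] up[of "ix True"] by (simp add: hi_def[of "Suc k"] hi_def[of "k + Kp"])
  have dn: "(q ^ Kp - 1) * lo k + hi k \<le> h (k + Kp) i" for i
  proof -
    obtain s0 where s0: "s0 < q ^ Kp" "h k (q ^ Kp * i + s0) = hi k" using hi_att by blast
    have "h k (q ^ Kp * i + s0) + (card {..<q^Kp} - 1) * lo k \<le> (\<Sum>s<q^Kp. h k (q ^ Kp * i + s))"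
      by (rule sum_ge_one_rest) (use s0 h_bounds in auto)
    then show ?thesis using hrec(1)[where j=Kp and k=k and i=i] s0 by simp
  qed
  show "(q ^ Kp - 1) * lo k + hi k \<le> lo (k + Kp)" using dn[of "ix False"] dn[of "ix True"] by (simp add: lo_def[of "Suc k"] lo_def[of "k + Kp"])
qed

end
end


context sfp begin

lemma qpos: "q > 0" using q by simp

context fixes w :: "bool list" begin

definition a where "a k = real (hi w k) / real q ^ k"
definition b where "b k = real (lo w k) / real q ^ k"

lemma lo_hi: "lo w k \<le> hi w k" using h_bounds[of w k 0] by simp
lemma hi_le: "hi w k \<le> q ^ k" using h_bounds[of w k "ix False"] hle[of w k "ix False"] hle[of w k "ix True"]
  by (simp add: hi_def)

lemma ab_basic: "0 \<le> b k" "b k \<le> a k" "a k \<le> 1"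
proof -
  have qk: "real q ^ k > 0" using qpos by simp
  show "0 \<le> b k" unfolding b_def using qk by simp
  show "b k \<le> a k" unfolding a_def b_def using qk lo_hi[of k] by (simp add: divide_right_mono)
  have "real (hi w k) \<le> real q ^ k" using hi_le[of k] by (metis of_nat_le_iff of_nat_power)
  then show "a k \<le> 1" unfolding a_def using qk by simp
qed

lemma a_step: "a (Suc k) \<le> a k + real (length w) / real q ^ k"
proof -
  have "real (hi w (Suc k)) \<le> real q * real (hi w k) + real q * real (length w)"
    using step1(1)[of w k] by (metis of_nat_add of_nat_le_iff of_nat_mult)
  then show ?thesis unfolding a_def using qpos by (simp add: field_simps)
qed

lemma b_step: "b k \<le> b (Suc k)"
proof -
  have "real q * real (lo w k) \<le> real (lo w (Suc k))"
    using step1(2)[of w k] by (metis of_nat_le_iff of_nat_mult)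
  then show ?thesis unfolding b_def using qpos by (simp add: field_simps)
qed

lemma contr: "a (k + Kp) - b (k + Kp) \<le> (1 - 2 / real q ^ Kp) * (a k - b k) + real (length w) / real q ^ k"
proof -
  define Q where "Q = real q ^ Kp"
  have Q1: "Q \<ge> 1" unfolding Q_def using q by simp
  have qK: "q ^ Kp \<ge> 1" using q by simp
  have e1: "real (q ^ Kp - 1) = Q - 1" unfolding Q_def using qK by (simp add: of_nat_diff)
  have "real (hi w (k + Kp)) \<le> real ((q ^ Kp - 1) * hi w k + lo w k + q ^ Kp * length w)"
    using stepK(1)[of w k] by (simp only: of_nat_le_iff)
  then have u: "real (hi w (k + Kp)) \<le> (Q - 1) * hi w k + lo w k + Q * length w"
    using e1 unfolding Q_def by simp
  have "real ((q ^ Kp - 1) * lo w k + hi w k) \<le> real (lo w (k + Kp))"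
    using stepK(2)[of w k] by (simp only: of_nat_le_iff)
  then have d: "(Q - 1) * lo w k + hi w k \<le> real (lo w (k + Kp))"
    using e1 unfolding Q_def by simp
  have qk: "real q ^ k > 0" using qpos by simp
  have "a (k + Kp) - b (k + Kp) = (real (hi w (k + Kp)) - real (lo w (k + Kp))) / (real q ^ k * Q)"
    unfolding a_def b_def Q_def by (simp add: power_add diff_divide_distrib)
  also have "\<dots> \<le> ((Q - 2) * (real (hi w k) - real (lo w k)) + Q * length w) / (real q ^ k * Q)"
    using u d qk Q1 by (intro divide_right_mono) (auto simp: algebra_simps)
  also have "\<dots> = (1 - 2 / Q) * (a k - b k) + real (length w) / real q ^ k"
    unfolding a_def b_def using qk Q1 by (simp add: field_simps)
  finally show ?thesis unfolding Q_def .
qed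

lemma geo0: "(\<lambda>k. c / real q ^ k) \<longlonglongrightarrow> 0"
proof -
  have "(\<lambda>k. c * (1 / real q) ^ k) \<longlonglongrightarrow> c * 0"
    using q by (intro tendsto_mult tendsto_const LIMSEQ_power_zero) auto
  then show ?thesis by (simp add: power_one_over divide_inverse power_inverse)
qed

lemma ab_conv: "\<exists>fr. a \<longlonglongrightarrow> fr \<and> b \<longlonglongrightarrow> fr"
proof -
  define m where "m = real (length w)"
  define A where "A k = a k + 2 * m / real q ^ k" for k
  have "decseq A"
  proof (rule decseq_SucI)
    fix k
    have "2 * m / real q ^ Suc k \<le> m / real q ^ k"
    proof -
      have "real q \<ge> 2" using q by simp
      then have "m * 2 \<le> real q * m" unfolding m_def by (metis mult.commute mult_left_mono of_nat_0_le_iff)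
      then show ?thesis using qpos by (simp add: field_simps)
    qed
    then show "A (Suc k) \<le> A k" unfolding A_def using a_step[of k] by (simp add: m_def)
  qed
  moreover have "\<forall>k. 0 \<le> A k"
  proof
    fix k
    have "0 \<le> a k" using ab_basic(1)[of k] ab_basic(2)[of k] by linarith
    moreover have "0 \<le> 2 * m / real q ^ k" unfolding m_def by simp
    ultimately show "0 \<le> A k" unfolding A_def by linarith
  qed
  ultimately obtain al where al: "A \<longlonglongrightarrow> al" by (rule decseq_convergent)
  have "incseq b" by (rule incseq_SucI) (rule b_step)
  moreover have "\<forall>k. b k \<le> 1" using ab_basic by (meson order_trans)
  ultimately obtain be where be: "b \<longlonglongrightarrow> be" by (rule incseq_convergent)
  have "(\<lambda>k. A k - 2 * m / real q ^ k) \<longlonglongrightarrow> al - 0" by (intro tendsto_diff al geo0)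
  then have ac: "a \<longlonglongrightarrow> al" unfolding A_def by simp
  have "be \<le> al" using ac be ab_basic(2) by (intro LIMSEQ_le) auto
  define Q where "Q = real q ^ Kp"
  have Q2: "Q \<ge> 2"
  proof -
    have "real q \<le> real q ^ Kp" using q Kp(1) power_increasing[of 1 Kp "real q"] by simp
    moreover have "(2::real) \<le> real q" using q by simp
    ultimately show ?thesis unfolding Q_def by (rule order_trans[rotated])
  qed
  have l1: "(\<lambda>k. a (k + Kp) - b (k + Kp)) \<longlonglongrightarrow> al - be"
    by (intro tendsto_diff LIMSEQ_ignore_initial_segment ac be)
  have l2: "(\<lambda>k. (1 - 2 / Q) * (a k - b k) + m / real q ^ k) \<longlonglongrightarrow> (1 - 2 / Q) * (al - be) + 0"
    by (intro tendsto_add tendsto_mult tendsto_const tendsto_diff ac be geo0)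
  have "al - be \<le> (1 - 2 / Q) * (al - be) + 0"
    using l1 l2 contr by (intro LIMSEQ_le) (auto simp: Q_def m_def)
  then have "(2 / Q) * (al - be) \<le> 0" by (simp add: algebra_simps)
  moreover have "2 / Q > 0" using Q2 by simp
  ultimately have "al \<le> be"
  proof -
    assume h1: "2 / Q * (al - be) \<le> 0" and h2: "2 / Q > 0"
    show "al \<le> be"
    proof (rule ccontr)
      assume "\<not> al \<le> be"
      then have "al - be > 0" by simp
      then have "2 / Q * (al - be) > 0" using h2 by (rule mult_pos_pos[rotated])
      then show False using h1 by simp
    qed
  qed
  then show ?thesis using ac be \<open>be \<le> al\<close> by auto
qed

end
end


context sfp begin
context fixes w :: "bool list" begin

definition Nw where "Nw n = card {i. i < n \<and> Pw w i}"

lemma block_lower: "real (n div q ^ k) * real (lo w k) \<le> real (Nw n)"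
proof -
  define B where "B = q ^ k"
  define t where "t = n div B"
  have "t * lo w k = (\<Sum>j<t. lo w k)" by simp
  also have "\<dots> \<le> (\<Sum>j<t. h w k j)" by (intro sum_mono h_bounds)
  also have "\<dots> = (\<Sum>j<t. cntg (Pw w) (length w) (0 + j * B) B)"
    unfolding h_def B_def by (simp add: mult.commute)
  also have "\<dots> \<le> cntg (Pw w) (length w) 0 (t * B)" by (rule cntg_blocks(1))
  also have "\<dots> \<le> cntg (Pw w) (length w) 0 n"
    by (rule cntg_mono) (simp add: t_def)
  also have "\<dots> \<le> Nw n" unfolding Nw_def by (rule count_vs_cntg(1))
  finally show ?thesis unfolding t_def B_def by (metis of_nat_le_iff of_nat_mult)
qed

lemma block_upper: "real (Nw n) \<le> (real (n div q ^ k) + 1) * (real (hi w k) + real (length w)) + real (length w)"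
proof -
  define B where "B = q ^ k"
  define t where "t = n div B"
  have Bp: "B > 0" unfolding B_def using qpos by simp
  have nle: "n \<le> Suc t * B"
  proof -
    have "n mod B < B" using Bp by simp
    moreover have "t * B + n mod B = n" unfolding t_def by (rule div_mult_mod_eq)
    moreover have "Suc t * B = t * B + B" by simp
    ultimately show ?thesis by linarith
  qed
  have "Nw n \<le> cntg (Pw w) (length w) 0 n + length w" unfolding Nw_def by (rule count_vs_cntg(2))
  also have "cntg (Pw w) (length w) 0 n \<le> cntg (Pw w) (length w) 0 (Suc t * B)" by (rule cntg_mono[OF nle])
  also have "\<dots> \<le> (\<Sum>j<Suc t. cntg (Pw w) (length w) (0 + j * B) B) + Suc t * length w" by (rule cntg_blocks(2))
  also have "(\<Sum>j<Suc t. cntg (Pw w) (length w) (0 + j * B) B) = (\<Sum>j<Suc t. h w k j)"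
    unfolding h_def B_def by (simp add: mult.commute)
  also have "\<dots> \<le> (\<Sum>j<Suc t. hi w k)" by (intro sum_mono h_bounds)
  finally have "Nw n \<le> Suc t * hi w k + Suc t * length w + length w" by simp
  then have "real (Nw n) \<le> real (Suc t * hi w k + Suc t * length w + length w)" by (simp only: of_nat_le_iff)
  then show ?thesis unfolding t_def B_def by (simp add: algebra_simps)
qed

lemma freq: "\<exists>fr. (\<lambda>n. real (Nw n) / real n) \<longlonglongrightarrow> fr"
proof -
  obtain fr where fa: "a w \<longlonglongrightarrow> fr" and fb: "b w \<longlonglongrightarrow> fr" using ab_conv by blast
  define m where "m = real (length w)"
  have fa2: "(\<lambda>k. a w k + m / real q ^ k) \<longlonglongrightarrow> fr + 0" by (intro tendsto_add fa geo0)
  have "(\<lambda>n. real (Nw n) / real n) \<longlonglongrightarrow> fr"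
  proof (rule LIMSEQ_I)
    fix r :: real assume r: "0 < r"
    have "eventually (\<lambda>k. b w k > fr - r / 2) sequentially"
      using fb r by (intro order_tendstoD) auto
    moreover have "eventually (\<lambda>k. a w k + m / real q ^ k < fr + r / 2) sequentially"
      using fa2 r by (intro order_tendstoD) auto
    ultimately have "eventually (\<lambda>k. b w k > fr - r / 2 \<and> a w k + m / real q ^ k < fr + r / 2) sequentially"
      by (rule eventually_conj)
    then obtain N where "\<forall>k\<ge>N. b w k > fr - r / 2 \<and> a w k + m / real q ^ k < fr + r / 2"
      unfolding eventually_sequentially by blast
    then obtain k where kb: "b w k > fr - r / 2" and ka: "a w k + m / real q ^ k < fr + r / 2" by blast
    define B where "B = real q ^ k"
    have Bp: "B > 0" unfolding B_def using qpos by simp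
    define n0 where "n0 = nat (ceiling (2 * (B + 2 * m + B) / r)) + 1"
    have "norm (real (Nw n) / real n - fr) < r" if n: "n \<ge> n0" for n
    proof -
      have "real n \<ge> real n0" using n by simp
      moreover have "real n0 > 2 * (B + 2 * m + B) / r" unfolding n0_def by linarith
      ultimately have nb: "real n > 2 * (B + 2 * m + B) / r" by linarith
      have m0: "m \<ge> 0" unfolding m_def by simp
      have "2 * (B + 2 * m + B) / r > 0" using Bp m0 r by simp
      then have np: "real n > 0" using nb by linarith
      have nr: "(B + 2 * m + B) / real n < r / 2" using nb np r by (simp add: field_simps)
      define t where "t = n div q ^ k"
      have tB1: "real t * B \<le> real n"
      proof -
        have "t * q ^ k \<le> n" unfolding t_def by simp
        then show ?thesis unfolding B_def by (metis of_nat_le_iff of_nat_mult of_nat_power)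
      qed
      have tB2: "real n < (real t + 1) * B"
      proof -
        have "n mod q ^ k < q ^ k" using qpos by simp
        moreover have "t * q ^ k + n mod q ^ k = n" unfolding t_def by (rule div_mult_mod_eq)
        moreover have "(t + 1) * q ^ k = t * q ^ k + q ^ k" by simp
        ultimately have "n < (t + 1) * q ^ k" by linarith
        then have "real n < real ((t + 1) * q ^ k)" by (simp only: of_nat_less_iff)
        then show ?thesis unfolding B_def by (simp add: algebra_simps)
      qed
      have lo_eq: "real (lo w k) = b w k * B" unfolding b_def B_def using Bp B_def by simp
      have hi_eq: "real (hi w k) = a w k * B" unfolding a_def B_def using Bp B_def by simp
      have b0: "0 \<le> b w k" "b w k \<le> 1" "a w k \<le> 1" using ab_basic[of w k] by auto
      have "real (Nw n) \<ge> real t * (b w k * B)" using block_lower[of n k] lo_eq unfolding t_def by simp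
      moreover have "real t * (b w k * B) \<ge> (real n - B) * b w k"
      proof -
        have "real n - B \<le> real t * B" using tB2 by (simp add: algebra_simps)
        from mult_right_mono[OF this b0(1)] show ?thesis by (simp add: algebra_simps)
      qed
      moreover have "(real n - B) * b w k \<ge> real n * b w k - B" using b0 Bp by (simp add: algebra_simps)
      ultimately have low: "real (Nw n) \<ge> real n * b w k - B" by linarith
      have "B / real n \<le> (B + 2 * m + B) / real n" using np m0 Bp by (intro divide_right_mono) auto
      then have "B / real n < r / 2" using nr by linarith
      then have Bn: "B < r / 2 * real n" using np by (simp add: pos_divide_less_eq)
      have "(fr - r / 2) * real n < b w k * real n" using kb np by (rule mult_strict_right_mono)
      then have "(fr - r) * real n < real (Nw n)" using low Bn by (simp add: algebra_simps)
      then have "real (Nw n) / real n > fr - r" using np by (simp add: pos_less_divide_eq)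
      have "real (Nw n) \<le> (real t + 1) * (a w k * B + m) + m"
        using block_upper[of n k] hi_eq unfolding t_def m_def by simp
      also have "(real t + 1) * (a w k * B + m) = ((real t + 1) * B) * (a w k + m / B)"
        using Bp by (simp add: field_simps)
      also have "\<dots> \<le> (real n + B) * (a w k + m / B)"
      proof (rule mult_right_mono)
        show "(real t + 1) * B \<le> real n + B" using tB1 by (simp add: algebra_simps)
        show "0 \<le> a w k + m / B" using b0 ab_basic(2)[of w k] m0 Bp by simp
      qed
      also have "\<dots> = real n * (a w k + m / B) + (B * a w k + m)" using Bp by (simp add: field_simps)
      finally have f1: "real (Nw n) \<le> real n * (a w k + m / B) + (B * a w k + m) + m" by simp
      have "B * a w k \<le> B" using b0(3) Bp by (simp add: mult_left_le)
      then have "real (Nw n) \<le> real n * (a w k + m / B) + (B + 2 * m + B)" using f1 m0 Bp by linarith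
      then have "real (Nw n) / real n \<le> (a w k + m / B) + (B + 2 * m + B) / real n"
        using np by (simp add: field_simps)
      then have "real (Nw n) / real n < fr + r" using nr ka unfolding B_def by linarith
      with \<open>real (Nw n) / real n > fr - r\<close> show ?thesis by (simp add: abs_less_iff)
    qed
    then show "\<exists>no. \<forall>n\<ge>no. norm (real (Nw n) / real n - fr) < r" by blast
  qed
  then show ?thesis by blast
qed

end
end


definition Sm :: "(nat \<Rightarrow> nat \<Rightarrow> bool) \<Rightarrow> nat \<Rightarrow> real" where
  "Sm R n = (\<Sum>i<n. \<Sum>j<n. of_bool (R i j))"

definition Wl :: "nat \<Rightarrow> bool list set" where "Wl m = {w. length w = m}"

lemma Wl: "finite (Wl m)" "card (Wl m) = 2 ^ m"
proof -
  have e: "Wl m = {xs. set xs \<subseteq> UNIV \<and> length xs = m}" by (simp add: Wl_def)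
  show "finite (Wl m)" unfolding e by (rule finite_lists_length_eq) simp
  show "card (Wl m) = 2 ^ m" unfolding e by (subst card_lists_length_eq) simp_all
qed

lemma Sm_nonneg: "0 \<le> Sm R n" unfolding Sm_def by (intro sum_nonneg) auto

lemma Sm_mono: "(\<And>i j. R i j \<Longrightarrow> R' i j) \<Longrightarrow> Sm R n \<le> Sm R' n"
  unfolding Sm_def by (intro sum_mono) auto

context sfp begin

definition M where "M m i j \<longleftrightarrow> (\<forall>t<m. x (i + t) = x (j + t))"

lemma factor_eq: "factor x i m = factor x j m \<longleftrightarrow> M m i j"
  unfolding factor_def M_def by (auto simp: map_eq_conv)

lemma fac_len: "length (factor x i m) = m" by (simp add: factor_def)

lemma Q_sum: "Sm (M m) n = (\<Sum>w\<in>Wl m. real (Nw w n) ^ 2)"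
proof -
  define fac where "fac i = factor x i m" for i
  have inner: "(\<Sum>j<n. of_bool (M m i j)) = real (Nw (fac i) n)" for i
  proof -
    have "(\<Sum>j<n. of_bool (M m i j)) = real (card ({..<n} \<inter> {j. M m i j}))" by simp
    also have "{..<n} \<inter> {j. M m i j} = {j. j < n \<and> Pw (fac i) j}"
      by (auto simp: Pw_def fac_def fac_len factor_eq M_def)
    finally show ?thesis by (simp add: Nw_def)
  qed
  have "Sm (M m) n = (\<Sum>i<n. real (Nw (fac i) n))" unfolding Sm_def inner ..
  also have "\<dots> = (\<Sum>w\<in>Wl m. real (card {i \<in> {..<n}. fac i = w}) * real (Nw w n))"
    by (rule sum_fun_comp[where g = fac and f = "\<lambda>w. real (Nw w n)"])
       (use Wl(1)[unfolded Wl_def] in \<open>auto simp: fac_def fac_len Wl_def\<close>)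
  also have "\<dots> = (\<Sum>w\<in>Wl m. real (Nw w n) ^ 2)"
  proof (rule sum.cong[OF refl])
    fix w assume "w \<in> Wl m"
    then have "{i \<in> {..<n}. fac i = w} = {i. i < n \<and> Pw w i}" by (auto simp: Wl_def Pw_def fac_def)
    then show "real (card {i \<in> {..<n}. fac i = w}) * real (Nw w n) = real (Nw w n) ^ 2"
      by (simp add: Nw_def power2_eq_square)
  qed
  finally show ?thesis .
qed

lemma N_sum: "(\<Sum>w\<in>Wl m. real (Nw w n)) = real n"
proof -
  define fac where "fac i = factor x i m" for i
  have "real n = (\<Sum>i<n. (\<lambda>w. 1::real) (fac i))" by simp
  also have "\<dots> = (\<Sum>w\<in>Wl m. real (card {i \<in> {..<n}. fac i = w}) * 1)"
    by (rule sum_fun_comp) (use Wl(1)[unfolded Wl_def] in \<open>auto simp: fac_def fac_len Wl_def\<close>)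
  also have "\<dots> = (\<Sum>w\<in>Wl m. real (Nw w n))"
  proof (rule sum.cong[OF refl])
    fix w assume "w \<in> Wl m"
    then have "{i \<in> {..<n}. fac i = w} = {i. i < n \<and> Pw w i}" by (auto simp: Wl_def Pw_def fac_def)
    then show "real (card {i \<in> {..<n}. fac i = w}) * 1 = real (Nw w n)" by (simp add: Nw_def)
  qed
  finally show ?thesis by simp
qed

lemma Q_conv: "(\<lambda>n. Sm (M m) n / real n ^ 2) \<longlonglongrightarrow> (\<Sum>w\<in>Wl m. lim (\<lambda>n. real (Nw w n) / real n) ^ 2)"
proof -
  have e: "Sm (M m) n / real n ^ 2 = (\<Sum>w\<in>Wl m. (real (Nw w n) / real n) ^ 2)" for n
    unfolding Q_sum by (simp add: sum_divide_distrib power_divide)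
  have "(\<lambda>n. \<Sum>w\<in>Wl m. (real (Nw w n) / real n) ^ 2) \<longlonglongrightarrow> (\<Sum>w\<in>Wl m. lim (\<lambda>n. real (Nw w n) / real n) ^ 2)"
  proof (intro tendsto_sum tendsto_power)
    fix w
    obtain fr where "(\<lambda>n. real (Nw w n) / real n) \<longlonglongrightarrow> fr" using freq by blast
    then show "(\<lambda>n. real (Nw w n) / real n) \<longlonglongrightarrow> lim (\<lambda>n. real (Nw w n) / real n)"
      using convergent_LIMSEQ_iff convergentI by blast
  qed
  then show ?thesis unfolding e .
qed

definition PP where "PP m = lim (\<lambda>n. Sm (M m) n / real n ^ 2)"

lemma PP: "(\<lambda>n. Sm (M m) n / real n ^ 2) \<longlonglongrightarrow> PP m"
  unfolding PP_def using Q_conv convergent_LIMSEQ_iff convergentI by blast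

lemma PP_nonneg: "0 \<le> PP m"
  by (rule LIMSEQ_le_const[OF PP]) (auto intro!: divide_nonneg_nonneg Sm_nonneg)

lemma PP_mono: "PP (Suc m) \<le> PP m"
proof (rule LIMSEQ_le[OF PP PP])
  show "\<exists>N. \<forall>n\<ge>N. Sm (M (Suc m)) n / real n ^ 2 \<le> Sm (M m) n / real n ^ 2"
    by (auto intro!: divide_right_mono Sm_mono simp: M_def)
qed

lemma PP_pos: "PP m \<ge> (1 / 2 ^ m) ^ 2"
proof (rule LIMSEQ_le_const[OF PP])
  show "\<exists>N. \<forall>n\<ge>N. (1 / 2 ^ m) ^ 2 \<le> Sm (M m) n / real n ^ 2"
  proof (intro exI allI impI)
    fix n :: nat assume n: "n \<ge> 1"
    have "replicate m False \<in> Wl m" by (simp add: Wl_def)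
    then have ne: "(\<lambda>w. real (Nw w n)) ` Wl m \<noteq> {}" by blast
    have fi: "finite ((\<lambda>w. real (Nw w n)) ` Wl m)" using Wl(1) by simp
    from Max_in[OF fi ne] obtain w where w1: "w \<in> Wl m" "Max ((\<lambda>w. real (Nw w n)) ` Wl m) = real (Nw w n)"
      by (rule imageE) auto
    have w2: "\<forall>w'\<in>Wl m. real (Nw w' n) \<le> real (Nw w n)"
    proof
      fix w' assume "w' \<in> Wl m"
      then have "real (Nw w' n) \<le> Max ((\<lambda>w. real (Nw w n)) ` Wl m)" by (intro Max_ge[OF fi]) (rule imageI)
      then show "real (Nw w' n) \<le> real (Nw w n)" using w1(2) by linarith
    qed
    note w = w1(1) w2
    have "real n = (\<Sum>w\<in>Wl m. real (Nw w n))" by (rule N_sum[symmetric])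
    also have "\<dots> \<le> of_nat (card (Wl m)) * real (Nw w n)" by (rule sum_bounded_above) (use w in auto)
    finally have nb: "real n \<le> 2 ^ m * real (Nw w n)" by (simp add: Wl)
    have "real (Nw w n) ^ 2 \<le> (\<Sum>w\<in>Wl m. real (Nw w n) ^ 2)"
      by (rule member_le_sum) (use w Wl in auto)
    then have le: "real (Nw w n) ^ 2 \<le> Sm (M m) n" unfolding Q_sum .
    have np: "real n > 0" using n by simp
    have "1 / 2 ^ m \<le> real (Nw w n) / real n" using nb np by (simp add: field_simps)
    then have "(1 / 2 ^ m) ^ 2 \<le> (real (Nw w n) / real n) ^ 2" by (rule power_mono) simp
    also have "\<dots> \<le> Sm (M m) n / real n ^ 2" using le np by (simp add: power_divide divide_right_mono)
    finally show "(1 / 2 ^ m) ^ 2 \<le> Sm (M m) n / real n ^ 2" .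
  qed
qed

end


lemma card_sep:
  assumes S: "S \<subseteq> {..<n}" and g: "g \<ge> 1" and sp: "\<forall>a\<in>S. \<forall>b\<in>S. a < b \<longrightarrow> g \<le> b - a"
  shows "real (card S) \<le> real n / real g + 1"
proof (cases "S = {}")
  case True then show ?thesis by simp
next
  case False
  then have n: "n \<ge> 1" using S by auto
  have inj: "inj_on (\<lambda>a. a div g) S"
  proof (rule inj_onI)
    fix a b assume ab: "a \<in> S" "b \<in> S" "a div g = b div g"
    show "a = b"
    proof (rule ccontr)
      assume "a \<noteq> b"
      then consider "a < b" | "b < a" by linarith
      then show False
      proof cases
        case 1
        then have "a + g \<le> b" using sp ab by force
        then have "(a + g) div g \<le> b div g" by (rule div_le_mono)
        then show False using ab(3) g by simp
      next
        case 2
        then have "b + g \<le> a" using sp ab by force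
        then have "(b + g) div g \<le> a div g" by (rule div_le_mono)
        then show False using ab(3) g by simp
      qed
    qed
  qed
  have "(\<lambda>a. a div g) ` S \<subseteq> {..(n - 1) div g}"
  proof
    fix y assume "y \<in> (\<lambda>a. a div g) ` S"
    then obtain a where a: "a \<in> S" "y = a div g" by blast
    then have "a \<le> n - 1" using S by auto
    then show "y \<in> {..(n - 1) div g}" using a by (simp add: div_le_mono)
  qed
  then have "card ((\<lambda>a. a div g) ` S) \<le> card {..(n - 1) div g}" by (intro card_mono) auto
  then have "card S \<le> (n - 1) div g + 1" using card_image[OF inj] by simp
  then have "real (card S) \<le> real ((n - 1) div g) + 1" by linarith
  also have "real ((n - 1) div g) \<le> real (n - 1) / real g" by (rule of_nat_div_le_of_nat)
  also have "\<dots> \<le> real n / real g" using g by (intro divide_right_mono) auto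
  finally show ?thesis by simp
qed

lemma Sm_Suc_shift:
  "Sm (\<lambda>i j. R (Suc i) (Suc j)) n \<le> Sm R (Suc n)"
  "Sm R (Suc n) \<le> Sm (\<lambda>i j. R (Suc i) (Suc j)) n + 2 * real n + 1"
  "(\<And>j. \<not> R 0 j) \<Longrightarrow> (\<And>i. \<not> R i 0) \<Longrightarrow> Sm R (Suc n) = Sm (\<lambda>i j. R (Suc i) (Suc j)) n"
proof -
  define r0 where "r0 = (\<Sum>j<Suc n. of_bool (R 0 j) :: real)"
  define c0 where "c0 = (\<Sum>i<n. of_bool (R (Suc i) 0) :: real)"
  define F where "F i = (\<Sum>j<Suc n. of_bool (R i j) :: real)" for i
  have F: "F (Suc i) = of_bool (R (Suc i) 0) + (\<Sum>j<n. of_bool (R (Suc i) (Suc j)))" for i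
    unfolding F_def by (rule sum.lessThan_Suc_shift)
  have "Sm R (Suc n) = (\<Sum>i<Suc n. F i)" unfolding Sm_def F_def ..
  also have "\<dots> = F 0 + (\<Sum>i<n. F (Suc i))" by (rule sum.lessThan_Suc_shift)
  also have "\<dots> = r0 + (c0 + Sm (\<lambda>i j. R (Suc i) (Suc j)) n)"
  proof -
    have "F 0 = r0" by (simp only: F_def r0_def)
    moreover have "(\<Sum>i<n. F (Suc i)) = c0 + Sm (\<lambda>i j. R (Suc i) (Suc j)) n"
      unfolding F c0_def Sm_def by (simp only: sum.distrib)
    ultimately show ?thesis by simp
  qed
  finally have e: "Sm R (Suc n) = r0 + c0 + Sm (\<lambda>i j. R (Suc i) (Suc j)) n" by simp
  have r0: "0 \<le> r0" "r0 \<le> real n + 1"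
  proof -
    show "0 \<le> r0" unfolding r0_def by (intro sum_nonneg) auto
    have "r0 \<le> of_nat (card {..<Suc n}) * 1" unfolding r0_def by (intro sum_bounded_above) auto
    then show "r0 \<le> real n + 1" by simp
  qed
  have c0: "0 \<le> c0" "c0 \<le> real n"
  proof -
    show "0 \<le> c0" unfolding c0_def by (intro sum_nonneg) auto
    have "c0 \<le> of_nat (card {..<n}) * 1" unfolding c0_def by (intro sum_bounded_above) auto
    then show "c0 \<le> real n" by simp
  qed
  show "Sm (\<lambda>i j. R (Suc i) (Suc j)) n \<le> Sm R (Suc n)" using e r0 c0 by linarith
  show "Sm R (Suc n) \<le> Sm (\<lambda>i j. R (Suc i) (Suc j)) n + 2 * real n + 1" using e r0 c0 by linarith
  assume "\<And>j. \<not> R 0 j" "\<And>i. \<not> R i 0"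
  then have "r0 = 0" "c0 = 0" unfolding r0_def c0_def by auto
  then show "Sm R (Suc n) = Sm (\<lambda>i j. R (Suc i) (Suc j)) n" using e by simp
qed

lemma Sm_Suc:
  "Sm R n \<le> Sm R (Suc n)" "Sm R (Suc n) \<le> Sm R n + 2 * real n + 1"
proof -
  define r0 where "r0 = (\<Sum>j<Suc n. of_bool (R n j) :: real)"
  define c0 where "c0 = (\<Sum>i<n. of_bool (R i n) :: real)"
  define F where "F i = (\<Sum>j<Suc n. of_bool (R i j) :: real)" for i
  have F: "F i = (\<Sum>j<n. of_bool (R i j)) + of_bool (R i n)" for i
    unfolding F_def by (rule sum.lessThan_Suc)
  have "Sm R (Suc n) = (\<Sum>i<Suc n. F i)" unfolding Sm_def F_def ..
  also have "\<dots> = (\<Sum>i<n. F i) + F n" by (rule sum.lessThan_Suc)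
  also have "\<dots> = Sm R n + c0 + r0"
  proof -
    have "F n = r0" by (simp only: F_def r0_def)
    moreover have "(\<Sum>i<n. F i) = Sm R n + c0"
      unfolding F c0_def Sm_def by (simp only: sum.distrib)
    ultimately show ?thesis by simp
  qed
  finally have e: "Sm R (Suc n) = Sm R n + c0 + r0" .
  have r0: "0 \<le> r0" "r0 \<le> real n + 1"
  proof -
    show "0 \<le> r0" unfolding r0_def by (intro sum_nonneg) auto
    have "r0 \<le> of_nat (card {..<Suc n}) * 1" unfolding r0_def by (intro sum_bounded_above) auto
    then show "r0 \<le> real n + 1" by simp
  qed
  have c0: "0 \<le> c0" "c0 \<le> real n"
  proof -
    show "0 \<le> c0" unfolding c0_def by (intro sum_nonneg) auto
    have "c0 \<le> of_nat (card {..<n}) * 1" unfolding c0_def by (intro sum_bounded_above) auto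
    then show "c0 \<le> real n" by simp
  qed
  show "Sm R n \<le> Sm R (Suc n)" using e r0 c0 by linarith
  show "Sm R (Suc n) \<le> Sm R n + 2 * real n + 1" using e r0 c0 by linarith
qed

lemma close_lim:
  assumes u: "u \<longlonglongrightarrow> P" and d: "\<And>n. \<bar>v n - w n\<bar> \<le> 2 * real n + 1"
    and w: "(\<lambda>n. w n / real (Suc n) ^ 2) = u"
  shows "(\<lambda>n. v n / real (Suc n) ^ 2) \<longlonglongrightarrow> P"
proof -
  have e: "(\<lambda>n. (v n - w n) / real (Suc n) ^ 2) \<longlonglongrightarrow> 0"
  proof (rule Lim_null_comparison)
    show "\<forall>\<^sub>F n in sequentially. norm ((v n - w n) / real (Suc n) ^ 2) \<le> 2 / real (Suc n)"
    proof (intro always_eventually allI)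
      fix n
      have p: "real (Suc n) ^ 2 > 0" by simp
      have "norm ((v n - w n) / real (Suc n) ^ 2) = \<bar>v n - w n\<bar> / real (Suc n) ^ 2" by (simp add: abs_divide)
      also have "\<dots> \<le> (2 * real n + 1) / real (Suc n) ^ 2" using d p by (intro divide_right_mono) auto
      also have "\<dots> \<le> (2 * real (Suc n)) / real (Suc n) ^ 2" using p by (intro divide_right_mono) auto
      also have "\<dots> = 2 / real (Suc n)"
      proof -
        have nz: "real (Suc n) \<noteq> 0" by simp
        show ?thesis using nonzero_mult_divide_mult_cancel_right[OF nz, of 2 "real (Suc n)"]
          by (simp only: power2_eq_square)
      qed
      finally show "norm ((v n - w n) / real (Suc n) ^ 2) \<le> 2 / real (Suc n)" .
    qed
    show "(\<lambda>n. 2 / real (Suc n)) \<longlonglongrightarrow> 0"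
      using LIMSEQ_Suc[OF lim_const_over_n[of "2::real"]] by simp
  qed
  have "(\<lambda>n. (v n - w n) / real (Suc n) ^ 2 + w n / real (Suc n) ^ 2) \<longlonglongrightarrow> 0 + P"
    using e u unfolding w[symmetric] by (intro tendsto_add) auto
  then show ?thesis by (simp add: diff_divide_distrib)
qed

lemma arith6: "(a - b - c + e + ((f - a) - (g - c))) / s =
   a / s - b / s - c / s + e / s + ((f - a) / s - (g - c) / (s::real))"
  by (simp add: diff_divide_distrib add_divide_distrib)

lemma tele: "k \<le> n \<Longrightarrow> (\<Sum>m\<in>{k..<n}. F m - F (Suc m)) = (F k - F n :: real)"
proof (induction n rule: dec_induct)
  case base then show ?case by simp
next
  case (step n) then show ?case by simp
qed

context sfp begin

lemma PP_small: assumes g: "g \<ge> 1" shows "\<exists>N0. \<forall>N\<ge>N0. PP N \<le> 1 / real g"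
proof -
  obtain N0 where N0: "\<forall>N\<ge>N0. \<forall>i j. i < j \<and> (\<forall>t<N. x (i + t) = x (j + t)) \<longrightarrow> j - i \<ge> g"
    using sep[OF g] by blast
  have "PP N \<le> 1 / real g" if N: "N \<ge> N0" for N
  proof -
    have bnd: "Sm (M N) n / real n ^ 2 \<le> 1 / real g + 1 / real n" if n: "n \<ge> 1" for n
    proof -
      have inner: "(\<Sum>j<n. of_bool (M N i j)) \<le> real n / real g + 1" for i
      proof -
        have "(\<Sum>j<n. of_bool (M N i j)) = real (card ({..<n} \<inter> {j. M N i j}))" by simp
        also have "\<dots> \<le> real n / real g + 1"
        proof (rule card_sep[OF _ g])
          show "{..<n} \<inter> {j. M N i j} \<subseteq> {..<n}" by auto
          show "\<forall>a\<in>{..<n} \<inter> {j. M N i j}. \<forall>b\<in>{..<n} \<inter> {j. M N i j}. a < b \<longrightarrow> g \<le> b - a"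
          proof (intro ballI impI)
            fix a b assume ab: "a \<in> {..<n} \<inter> {j. M N i j}" "b \<in> {..<n} \<inter> {j. M N i j}" "a < b"
            then have "\<forall>t<N. x (a + t) = x (b + t)" by (auto simp: M_def)
            then show "g \<le> b - a" using N0 N ab(3) by blast
          qed
        qed
        finally show ?thesis .
      qed
      have "Sm (M N) n \<le> (\<Sum>i<n. real n / real g + 1)" unfolding Sm_def by (intro sum_mono inner)
      also have "\<dots> = real n * (real n / real g + 1)" by simp
      finally have "Sm (M N) n \<le> real n * (real n / real g + 1)" .
      moreover have np: "real n > 0" using n by simp
      ultimately have "Sm (M N) n / real n ^ 2 \<le> real n * (real n / real g + 1) / real n ^ 2"
        by (intro divide_right_mono) auto
      also have "\<dots> = 1 / real g + 1 / real n" using np by (simp add: field_simps power2_eq_square)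
      finally show ?thesis .
    qed
    have "(\<lambda>n. 1 / real g + 1 / real n) \<longlonglongrightarrow> 1 / real g + 0"
      by (intro tendsto_add tendsto_const lim_const_over_n)
    then have "PP N \<le> 1 / real g + 0"
      by (rule LIMSEQ_le[OF PP]) (use bnd in auto)
    then show ?thesis by simp
  qed
  then show ?thesis by blast
qed

lemma PP_lim0: "PP \<longlonglongrightarrow> 0"
proof (rule LIMSEQ_I)
  fix r :: real assume r: "0 < r"
  define g where "g = nat (ceiling (1 / r)) + 1"
  have g1: "g \<ge> 1" unfolding g_def by simp
  have "real g > 1 / r" unfolding g_def by linarith
  moreover have gpos: "real g > 0" using g1 by simp
  ultimately have gr: "1 / real g < r" using r by (simp add: pos_divide_less_eq pos_less_divide_eq mult.commute)
  obtain N0 where N0: "\<forall>N\<ge>N0. PP N \<le> 1 / real g" using PP_small[OF g1] by blast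
  have "norm (PP N - 0) < r" if "N \<ge> N0" for N
    using N0 that gr PP_nonneg[of N] by auto
  then show "\<exists>no. \<forall>n\<ge>no. norm (PP n - 0) < r" by blast
qed

lemma M_front: "M (Suc m) i j \<longleftrightarrow> x i = x j \<and> M m (Suc i) (Suc j)"
  unfolding M_def by (auto simp: less_Suc_eq_0_disj)

lemma M_back: "M (Suc m) i j \<longleftrightarrow> M m i j \<and> x (i + m) = x (j + m)"
  unfolding M_def by (auto simp: less_Suc_eq)

lemma K_pointwise:
  "(of_bool ((Suc i, Suc j) \<in> inner_line_starts x l) :: real) =
     of_bool (M l (Suc i) (Suc j)) - of_bool (M (Suc l) i j) - of_bool (M (Suc l) (Suc i) (Suc j))
     + of_bool (M (Suc (Suc l)) i j)"
proof -
  have k: "(Suc i, Suc j) \<in> inner_line_starts x l \<longleftrightarrow>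
      x i \<noteq> x j \<and> M l (Suc i) (Suc j) \<and> x (Suc i + l) \<noteq> x (Suc j + l)"
    unfolding inner_line_starts_def M_def by auto
  show ?thesis unfolding k M_front[of "Suc l" i j] M_back[of l "Suc i" "Suc j"] M_front[of l i j]
    by (cases "x i = x j"; cases "M l (Suc i) (Suc j)"; cases "x (Suc i + l) = x (Suc j + l)") simp_all
qed

lemma card_box: "real (card (A \<inter> ({0..<n} \<times> {0..<n}))) = Sm (\<lambda>i j. (i, j) \<in> A) n"
proof -
  have 1: "Sm (\<lambda>i j. (i, j) \<in> A) n = sum (case_prod (\<lambda>i j. of_bool ((i, j) \<in> A))) ({..<n} \<times> {..<n})"
    unfolding Sm_def by (rule sum.cartesian_product)
  have 2: "case_prod (\<lambda>i j. of_bool ((i, j) \<in> A)) = (\<lambda>p. of_bool (p \<in> A) :: real)" by auto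
  have "Sm (\<lambda>i j. (i, j) \<in> A) n = (\<Sum>p\<in>{..<n} \<times> {..<n}. of_bool (p \<in> A))"
    unfolding 1 2 ..
  also have "\<dots> = real (card (({..<n} \<times> {..<n}) \<inter> {p. p \<in> A}))" by (intro sum_of_bool_eq finite_cartesian_product finite_lessThan)
  finally show ?thesis by (simp add: atLeast0LessThan Int_commute)
qed

lemma K_density: "(\<lambda>n. real (card (inner_line_starts x l \<inter> ({0..<n} \<times> {0..<n}))) / real n ^ 2)
   \<longlonglongrightarrow> PP l - PP (Suc l) - PP (Suc l) + PP (Suc (Suc l))"
proof -
  let ?K = "\<lambda>i j. (i, j) \<in> inner_line_starts x l"
  have KS: "Sm ?K (Suc n) = Sm (M l) (Suc n) - Sm (M (Suc l)) n - Sm (M (Suc l)) (Suc n) + Sm (M (Suc (Suc l))) n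
     + ((Sm (\<lambda>i j. M l (Suc i) (Suc j)) n - Sm (M l) (Suc n)) - (Sm (\<lambda>i j. M (Suc l) (Suc i) (Suc j)) n - Sm (M (Suc l)) (Suc n)))" for n
  proof -
    have "Sm ?K (Suc n) = Sm (\<lambda>i j. ?K (Suc i) (Suc j)) n"
      by (rule Sm_Suc_shift(3)) (auto simp: inner_line_starts_def)
    also have "\<dots> = Sm (\<lambda>i j. M l (Suc i) (Suc j)) n - Sm (M (Suc l)) n - Sm (\<lambda>i j. M (Suc l) (Suc i) (Suc j)) n
        + Sm (M (Suc (Suc l))) n"
      unfolding Sm_def K_pointwise by (simp add: sum.distrib sum_subtractf)
    finally show ?thesis by simp
  qed
  have l1: "(\<lambda>n. Sm (M m) (Suc n) / real (Suc n) ^ 2) \<longlonglongrightarrow> PP m" for m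
    using LIMSEQ_Suc[OF PP[of m]] by simp
  have l2: "(\<lambda>n. Sm (M m) n / real (Suc n) ^ 2) \<longlonglongrightarrow> PP m" for m
  proof (rule close_lim[OF l1, where w = "\<lambda>n. Sm (M m) (Suc n)"])
    fix n show "\<bar>Sm (M m) n - Sm (M m) (Suc n)\<bar> \<le> 2 * real n + 1"
      using Sm_Suc(1)[of "M m" n] Sm_Suc(2)[of "M m" n] by (simp add: abs_le_iff)
  qed simp
  have l3: "(\<lambda>n. (Sm (\<lambda>i j. M m (Suc i) (Suc j)) n - Sm (M m) (Suc n)) / real (Suc n) ^ 2) \<longlonglongrightarrow> 0" for m
  proof -
    have "(\<lambda>n. Sm (\<lambda>i j. M m (Suc i) (Suc j)) n / real (Suc n) ^ 2) \<longlonglongrightarrow> PP m"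
    proof (rule close_lim[OF l1, where w = "\<lambda>n. Sm (M m) (Suc n)"])
      fix n show "\<bar>Sm (\<lambda>i j. M m (Suc i) (Suc j)) n - Sm (M m) (Suc n)\<bar> \<le> 2 * real n + 1"
        using Sm_Suc_shift(1)[of "M m" n] Sm_Suc_shift(2)[of "M m" n] by (simp add: abs_le_iff)
    qed simp
    from tendsto_diff[OF this l1[of m]] show ?thesis by (simp add: diff_divide_distrib)
  qed
  have lim: "(\<lambda>n. Sm (M l) (Suc n) / real (Suc n) ^ 2 - Sm (M (Suc l)) n / real (Suc n) ^ 2
      - Sm (M (Suc l)) (Suc n) / real (Suc n) ^ 2 + Sm (M (Suc (Suc l))) n / real (Suc n) ^ 2
      + ((Sm (\<lambda>i j. M l (Suc i) (Suc j)) n - Sm (M l) (Suc n)) / real (Suc n) ^ 2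
         - (Sm (\<lambda>i j. M (Suc l) (Suc i) (Suc j)) n - Sm (M (Suc l)) (Suc n)) / real (Suc n) ^ 2))
      \<longlonglongrightarrow> PP l - PP (Suc l) - PP (Suc l) + PP (Suc (Suc l)) + (0 - 0)"
    by (rule tendsto_add[OF tendsto_add[OF tendsto_diff[OF tendsto_diff[OF l1[of l] l2[of "Suc l"]] l1[of "Suc l"]] l2[of "Suc (Suc l)"]]
      tendsto_diff[OF l3[of l] l3[of "Suc l"]]])
  have ev: "\<forall>\<^sub>F n in sequentially. Sm (M l) (Suc n) / real (Suc n) ^ 2 - Sm (M (Suc l)) n / real (Suc n) ^ 2
      - Sm (M (Suc l)) (Suc n) / real (Suc n) ^ 2 + Sm (M (Suc (Suc l))) n / real (Suc n) ^ 2
      + ((Sm (\<lambda>i j. M l (Suc i) (Suc j)) n - Sm (M l) (Suc n)) / real (Suc n) ^ 2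
         - (Sm (\<lambda>i j. M (Suc l) (Suc i) (Suc j)) n - Sm (M (Suc l)) (Suc n)) / real (Suc n) ^ 2)
      = Sm ?K (Suc n) / real (Suc n) ^ 2"
  proof (intro always_eventually allI)
    fix n
    show "Sm (M l) (Suc n) / real (Suc n) ^ 2 - Sm (M (Suc l)) n / real (Suc n) ^ 2
      - Sm (M (Suc l)) (Suc n) / real (Suc n) ^ 2 + Sm (M (Suc (Suc l))) n / real (Suc n) ^ 2
      + ((Sm (\<lambda>i j. M l (Suc i) (Suc j)) n - Sm (M l) (Suc n)) / real (Suc n) ^ 2
         - (Sm (\<lambda>i j. M (Suc l) (Suc i) (Suc j)) n - Sm (M (Suc l)) (Suc n)) / real (Suc n) ^ 2)
      = Sm ?K (Suc n) / real (Suc n) ^ 2"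
      by (subst KS[of n]) (rule arith6[symmetric])
  qed
  have "(\<lambda>n. Sm ?K (Suc n) / real (Suc n) ^ 2) \<longlonglongrightarrow> PP l - PP (Suc l) - PP (Suc l) + PP (Suc (Suc l)) + (0 - 0)"
    by (rule Lim_transform_eventually[OF lim ev])
  then have "(\<lambda>n. Sm ?K (Suc n) / real (Suc n) ^ 2) \<longlonglongrightarrow> PP l - PP (Suc l) - PP (Suc l) + PP (Suc (Suc l))"
    by simp
  then have "(\<lambda>n. Sm ?K n / real n ^ 2) \<longlonglongrightarrow> PP l - PP (Suc l) - PP (Suc l) + PP (Suc (Suc l))"
    by (rule LIMSEQ_imp_Suc)
  then show ?thesis unfolding card_box .
qed

end


lemma rho_half: "rho y z \<le> 1 / 2 \<longleftrightarrow> y 0 = z 0"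
proof (cases "y = z")
  case True then show ?thesis by (simp add: rho_def)
next
  case False
  then obtain i0 where "y i0 \<noteq> z i0" by auto
  then have ex: "\<exists>i. y i \<noteq> z i" by blast
  define k where "k = (LEAST i. y i \<noteq> z i)"
  have rk: "rho y z = (1/2) ^ k" using False by (simp add: rho_def k_def)
  show ?thesis
  proof (cases "y 0 = z 0")
    case True
    have "y k \<noteq> z k" unfolding k_def by (rule LeastI_ex[OF ex])
    then have "k \<ge> 1" using True by (cases k) auto
    then have "(1/2::real) ^ k \<le> (1/2) ^ 1" by (intro power_decreasing) auto
    then show ?thesis using True rk by simp
  next
    case f: False
    then have "k = 0" unfolding k_def by (intro Least_eq_0) simp
    then show ?thesis using f rk by simp
  qed
qed

context sfp begin

definition DD where "DD l = PP l - PP (Suc l)"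

lemma dens: "density (inner_line_starts x l) = DD l - DD (Suc l)"
proof -
  have "density (inner_line_starts x l) = PP l - PP (Suc l) - PP (Suc l) + PP (Suc (Suc l))"
    unfolding density_def by (rule limI[OF K_density])
  then show ?thesis by (simp add: DD_def)
qed

lemma dens_nonneg: "DD (Suc l) \<le> DD l"
proof -
  have "0 \<le> PP l - PP (Suc l) - PP (Suc l) + PP (Suc (Suc l))"
    by (rule LIMSEQ_le_const[OF K_density]) (auto intro!: divide_nonneg_nonneg)
  then show ?thesis by (simp add: DD_def)
qed

lemma DD_nonneg: "0 \<le> DD l" using PP_mono[of l] by (simp add: DD_def)

lemma partial: "(\<Sum>m<N. real (m + 1) * (DD (m + L) - DD (Suc (m + L)))) = PP L - PP (N + L) - real N * DD (N + L)"
proof (induction N)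
  case 0 then show ?case by simp
next
  case (Suc N)
  then show ?case by (simp add: DD_def algebra_simps)
qed

lemma NDD: "(\<lambda>N. real N * DD (N + L)) \<longlonglongrightarrow> 0"
proof (rule LIMSEQ_I)
  fix r :: real assume r: "0 < r"
  obtain N1 where N1: "\<forall>j\<ge>N1. norm (PP j - 0) < r / 2" using LIMSEQ_D[OF PP_lim0, of "r/2"] r by auto
  have dec: "decseq (\<lambda>n. DD (n + L))" by (rule decseq_SucI) (simp add: dens_nonneg)
  have "norm (real n * DD (n + L) - 0) < r" if n: "n \<ge> 2 * N1" for n
  proof -
    define k where "k = n div 2"
    have kn: "k \<le> n" unfolding k_def by simp
    have "real (card {k..<n}) * DD (n + L) \<le> (\<Sum>m\<in>{k..<n}. DD (m + L))"
      by (rule sum_bounded_below) (use dec in \<open>auto simp: decseq_def\<close>)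
    also have "\<dots> = (\<Sum>m\<in>{k..<n}. PP (m + L) - PP (Suc m + L))" by (simp add: DD_def)
    also have "\<dots> = PP (k + L) - PP (n + L)" by (rule tele[OF kn])
    also have "\<dots> \<le> PP (k + L)" using PP_nonneg[of "n + L"] by simp
    finally have a: "real (n - k) * DD (n + L) \<le> PP (k + L)" by simp
    have "real n \<le> 2 * real (n - k)" unfolding k_def by linarith
    then have "real n * DD (n + L) \<le> 2 * real (n - k) * DD (n + L)"
      using DD_nonneg by (intro mult_right_mono) auto
    also have "\<dots> \<le> 2 * PP (k + L)" using a by simp
    also have "PP (k + L) < r / 2"
    proof -
      have "(2 * N1) div 2 \<le> n div 2" using n by (rule div_le_mono)
      then have "N1 \<le> k + L" unfolding k_def by simp
      then have "norm (PP (k + L) - 0) < r / 2" using N1 by blast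
      then show ?thesis by simp
    qed
    finally have "real n * DD (n + L) < r" by simp
    moreover have "0 \<le> real n * DD (n + L)" using DD_nonneg by simp
    ultimately show ?thesis by simp
  qed
  then show "\<exists>no. \<forall>n\<ge>no. norm (real n * DD (n + L) - 0) < r" by blast
qed

lemma corr_eq: assumes L: "L \<ge> 1" shows "corr_sum L x n (1/2) = Sm (M L) n / real n ^ 2"
proof -
  have cond: "Max ((\<lambda>k. rho ((shift ^^ (i + k)) x) ((shift ^^ (j + k)) x)) ` {0..<L}) \<le> 1/2 \<longleftrightarrow> M L i j" for i j
  proof -
    have "Max ((\<lambda>k. rho ((shift ^^ (i + k)) x) ((shift ^^ (j + k)) x)) ` {0..<L}) \<le> 1/2 \<longleftrightarrow>
        (\<forall>k\<in>{0..<L}. rho ((shift ^^ (i + k)) x) ((shift ^^ (j + k)) x) \<le> 1/2)"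
      using L by (subst Max_le_iff) auto
    also have "\<dots> \<longleftrightarrow> M L i j" unfolding rho_half shift_pow M_def by auto
    finally show ?thesis .
  qed
  have "{(i, j) \<in> {0..<n} \<times> {0..<n}.
        Max ((\<lambda>k. rho ((shift ^^ (i + k)) x) ((shift ^^ (j + k)) x)) ` {0..<L}) \<le> 1/2}
      = {(i, j). M L i j} \<inter> ({0..<n} \<times> {0..<n})"
    using cond by auto
  then have "real (card {(i, j) \<in> {0..<n} \<times> {0..<n}.
        Max ((\<lambda>k. rho ((shift ^^ (i + k)) x) ((shift ^^ (j + k)) x)) ` {0..<L}) \<le> 1/2}) = Sm (M L) n"
    using card_box[of "{(i, j). M L i j}" n] by simp
  then show ?thesis unfolding corr_sum_def by simp
qed

lemma main: assumes L: "L \<ge> 1"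
  shows "\<exists>S. (\<lambda>n. corr_sum L x n (1/2)) \<longlonglongrightarrow> S
           \<and> (\<lambda>m. real (m + 1) * density (inner_line_starts x (m + L))) sums S
           \<and> S > 0"
proof (intro exI conjI)
  show "(\<lambda>n. corr_sum L x n (1/2)) \<longlonglongrightarrow> PP L" unfolding corr_eq[OF L] by (rule PP)
  have "(\<lambda>N. PP L - PP (N + L) - real N * DD (N + L)) \<longlonglongrightarrow> PP L - 0 - 0"
    by (intro tendsto_diff tendsto_const NDD LIMSEQ_ignore_initial_segment[OF PP_lim0])
  then show "(\<lambda>m. real (m + 1) * density (inner_line_starts x (m + L))) sums PP L"
    unfolding sums_def dens partial by simp
  have "(1 / 2 ^ L) ^ 2 > (0::real)" by simp
  then show "PP L > 0" using PP_pos[of L] by linarith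
qed

end

theorem proposition3p8:
  fixes \<zeta> :: "bool \<Rightarrow> bool list" and q :: nat and x :: "nat \<Rightarrow> bool" and L :: nat
  assumes q: "q \<ge> 2" and const: "constant_length \<zeta> q"
    and prim: "primitive_subst \<zeta>" and aper: "aperiodic_subst \<zeta>"
    and start0: "hd (\<zeta> False) = False"
    and fixpt: "\<forall>k i. i < length (subst_iter \<zeta> k False) \<longrightarrow> x i = subst_iter \<zeta> k False ! i"
    and Lpos: "L \<ge> 1"
  shows "\<exists>S. (\<lambda>n. corr_sum L x n (1/2)) \<longlonglongrightarrow> S
           \<and> (\<lambda>m. real (m + 1) * density (inner_line_starts x (m + L))) sums S
           \<and> S > 0"
proof -
  interpret sfp \<zeta> q x using q const prim aper fixpt by unfold_locales
  show ?thesis using main[OF Lpos] .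
qed

end
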